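(* Let $G$ be a connected $(P_6,C_5)$-free graph, and suppose $G$ contains a chromatic cutset $S$ that is also a minimal separator. Let $(S_1,\dots,S_t)$ be a partition of $S$ into 1-chromatic sets that are pairwise complete to each other, and let $G'$ be obtained from $G$ by contracting each $S_i$ into a new vertex $s_i$ (i.e., replacing $S_i$ by a vertex $s_i$ whose neighborhood is exactly the set of vertices outside $S_i$ having a neighbor in $S_i$). Then $G'$ is $(P_6,C_5)$-free.
   Context: Graphs are finite and simple. A graph is $(P_6,C_5)$-free if it has no induced 6-vertex path and no induced 5-cycle. A set $S\subseteq V(G)$ is 1-chromatic if $S$ is an independent set and in every 4-coloring of $G$ all vertices of $S$ receive the same color. A set $S$ is a cutset if $G$ is connected and $G-S$ is disconnected. A cutset $S$ is a chromatic cutset if it admits a partition into 1-chromatic sets that are pairwise complete to each other (every vertex of one part adjacent to every vertex of another). A cutset $S$ is a minimal separator if there are two distinct connected components $K,K'$ of $G-S$ such that every vertex of $S$ has a neighbor in $K$ and a neighbor in $K'$. *)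

theory Defs
  imports Main
begin

definition graph :: "'a set \<Rightarrow> ('a \<Rightarrow> 'a \<Rightarrow> bool) \<Rightarrow> bool" where
  "graph V E \<longleftrightarrow> finite V \<and> (\<forall>x y. E x y \<longrightarrow> x \<in> V \<and> y \<in> V \<and> x \<noteq> y \<and> E y x)"

definition induced_P6 :: "'a set \<Rightarrow> ('a \<Rightarrow> 'a \<Rightarrow> bool) \<Rightarrow> 'a list \<Rightarrow> bool" where
  "induced_P6 V E p \<longleftrightarrow> length p = 6 \<and> distinct p \<and> set p \<subseteq> V \<and>
     (\<forall>i<6. \<forall>j<6. E (p!i) (p!j) \<longleftrightarrow> (i = j + 1 \<or> j = i + 1))"

definition induced_C5 :: "'a set \<Rightarrow> ('a \<Rightarrow> 'a \<Rightarrow> bool) \<Rightarrow> 'a list \<Rightarrow> bool" where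
  "induced_C5 V E c \<longleftrightarrow> length c = 5 \<and> distinct c \<and> set c \<subseteq> V \<and>
     (\<forall>i<5. \<forall>j<5. E (c!i) (c!j) \<longleftrightarrow> (j = (i + 1) mod 5 \<or> i = (j + 1) mod 5))"

definition P6_C5_free :: "'a set \<Rightarrow> ('a \<Rightarrow> 'a \<Rightarrow> bool) \<Rightarrow> bool" where
  "P6_C5_free V E \<longleftrightarrow> (\<nexists>p. induced_P6 V E p) \<and> (\<nexists>c. induced_C5 V E c)"

definition reach_in :: "('a \<Rightarrow> 'a \<Rightarrow> bool) \<Rightarrow> 'a set \<Rightarrow> 'a \<Rightarrow> 'a \<Rightarrow> bool" where
  "reach_in E A x y \<longleftrightarrow> x \<in> A \<and> y \<in> A \<and> (\<lambda>u v. E u v \<and> u \<in> A \<and> v \<in> A)\<^sup>*\<^sup>* x y"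

definition connected_set :: "('a \<Rightarrow> 'a \<Rightarrow> bool) \<Rightarrow> 'a set \<Rightarrow> bool" where
  "connected_set E A \<longleftrightarrow> (\<forall>x\<in>A. \<forall>y\<in>A. reach_in E A x y)"

definition connected_graph :: "'a set \<Rightarrow> ('a \<Rightarrow> 'a \<Rightarrow> bool) \<Rightarrow> bool" where
  "connected_graph V E \<longleftrightarrow> V \<noteq> {} \<and> connected_set E V"

definition component :: "('a \<Rightarrow> 'a \<Rightarrow> bool) \<Rightarrow> 'a set \<Rightarrow> 'a set \<Rightarrow> bool" where
  "component E A K \<longleftrightarrow> (\<exists>x\<in>A. K = {y. reach_in E A x y})"

definition independent :: "('a \<Rightarrow> 'a \<Rightarrow> bool) \<Rightarrow> 'a set \<Rightarrow> bool" where
  "independent E S \<longleftrightarrow> (\<forall>x\<in>S. \<forall>y\<in>S. \<not> E x y)"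

definition four_coloring :: "'a set \<Rightarrow> ('a \<Rightarrow> 'a \<Rightarrow> bool) \<Rightarrow> ('a \<Rightarrow> nat) \<Rightarrow> bool" where
  "four_coloring V E c \<longleftrightarrow> (\<forall>x\<in>V. c x < 4) \<and> (\<forall>x\<in>V. \<forall>y\<in>V. E x y \<longrightarrow> c x \<noteq> c y)"

definition one_chromatic :: "'a set \<Rightarrow> ('a \<Rightarrow> 'a \<Rightarrow> bool) \<Rightarrow> 'a set \<Rightarrow> bool" where
  "one_chromatic V E S \<longleftrightarrow> S \<subseteq> V \<and> independent E S \<and>
     (\<forall>c. four_coloring V E c \<longrightarrow> (\<forall>x\<in>S. \<forall>y\<in>S. c x = c y))"

definition complete_to :: "('a \<Rightarrow> 'a \<Rightarrow> bool) \<Rightarrow> 'a set \<Rightarrow> 'a set \<Rightarrow> bool" where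
  "complete_to E X Y \<longleftrightarrow> (\<forall>x\<in>X. \<forall>y\<in>Y. E x y)"

definition cutset :: "'a set \<Rightarrow> ('a \<Rightarrow> 'a \<Rightarrow> bool) \<Rightarrow> 'a set \<Rightarrow> bool" where
  "cutset V E S \<longleftrightarrow> S \<subseteq> V \<and> connected_graph V E \<and> \<not> connected_set E (V - S)"

definition chromatic_partition :: "'a set \<Rightarrow> ('a \<Rightarrow> 'a \<Rightarrow> bool) \<Rightarrow> 'a set \<Rightarrow> 'a set set \<Rightarrow> bool" where
  "chromatic_partition V E S P \<longleftrightarrow>
     (\<forall>X\<in>P. X \<noteq> {}) \<and> \<Union>P = S \<and> (\<forall>X\<in>P. \<forall>Y\<in>P. X \<noteq> Y \<longrightarrow> X \<inter> Y = {}) \<and>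
     (\<forall>X\<in>P. one_chromatic V E X) \<and> (\<forall>X\<in>P. \<forall>Y\<in>P. X \<noteq> Y \<longrightarrow> complete_to E X Y)"

definition chromatic_cutset :: "'a set \<Rightarrow> ('a \<Rightarrow> 'a \<Rightarrow> bool) \<Rightarrow> 'a set \<Rightarrow> bool" where
  "chromatic_cutset V E S \<longleftrightarrow> cutset V E S \<and> (\<exists>P. chromatic_partition V E S P)"

definition minimal_separator :: "'a set \<Rightarrow> ('a \<Rightarrow> 'a \<Rightarrow> bool) \<Rightarrow> 'a set \<Rightarrow> bool" where
  "minimal_separator V E S \<longleftrightarrow> cutset V E S \<and>
     (\<exists>K K'. component E (V - S) K \<and> component E (V - S) K' \<and> K \<noteq> K' \<and>
        (\<forall>s\<in>S. (\<exists>k\<in>K. E s k) \<and> (\<exists>k\<in>K'. E s k)))"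

text \<open>Contraction of each part X of P into a new vertex (Inr X); other vertices are Inl v.\<close>
definition contract_V :: "'a set \<Rightarrow> 'a set \<Rightarrow> 'a set set \<Rightarrow> ('a + 'a set) set" where
  "contract_V V S P = Inl ` (V - S) \<union> Inr ` P"

fun contract_E :: "'a set \<Rightarrow> ('a \<Rightarrow> 'a \<Rightarrow> bool) \<Rightarrow> 'a set \<Rightarrow> 'a set set \<Rightarrow>
    ('a + 'a set) \<Rightarrow> ('a + 'a set) \<Rightarrow> bool" where
  "contract_E V E S P (Inl u) (Inl v) \<longleftrightarrow> u \<in> V - S \<and> v \<in> V - S \<and> E u v"
| "contract_E V E S P (Inl u) (Inr Y) \<longleftrightarrow> u \<in> V - S \<and> Y \<in> P \<and> (\<exists>y\<in>Y. E u y)"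
| "contract_E V E S P (Inr X) (Inl v) \<longleftrightarrow> v \<in> V - S \<and> X \<in> P \<and> (\<exists>x\<in>X. E x v)"
| "contract_E V E S P (Inr X) (Inr Y) \<longleftrightarrow> X \<in> P \<and> Y \<in> P \<and> X \<noteq> Y \<and> (\<exists>x\<in>X. \<exists>y\<in>Y. E x y)"

end

theory Submission
  imports Defs
begin
lemma all6: "(\<forall>i<(6::nat). P i) \<longleftrightarrow> P 0 \<and> P 1 \<and> P 2 \<and> P 3 \<and> P 4 \<and> P 5"
  by (simp add: eval_nat_numeral All_less_Suc conj_ac)
lemma all5: "(\<forall>i<(5::nat). P i) \<longleftrightarrow> P 0 \<and> P 1 \<and> P 2 \<and> P 3 \<and> P 4"
  by (simp add: eval_nat_numeral All_less_Suc conj_ac)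

lemma P6_iff:
  "induced_P6 V E [a0,a1,a2,a3,a4,a5] \<longleftrightarrow> distinct [a0,a1,a2,a3,a4,a5] \<and> set [a0,a1,a2,a3,a4,a5] \<subseteq> V \<and>
   (\<not> E a0 a0) \<and> (E a0 a1) \<and> (\<not> E a0 a2) \<and> (\<not> E a0 a3) \<and> (\<not> E a0 a4) \<and> (\<not> E a0 a5) \<and> (E a1 a0) \<and> (\<not> E a1 a1) \<and> (E a1 a2) \<and> (\<not> E a1 a3) \<and> (\<not> E a1 a4) \<and> (\<not> E a1 a5) \<and> (\<not> E a2 a0) \<and> (E a2 a1) \<and> (\<not> E a2 a2) \<and> (E a2 a3) \<and> (\<not> E a2 a4) \<and> (\<not> E a2 a5) \<and> (\<not> E a3 a0) \<and> (\<not> E a3 a1) \<and> (E a3 a2) \<and> (\<not> E a3 a3) \<and> (E a3 a4) \<and> (\<not> E a3 a5) \<and> (\<not> E a4 a0) \<and> (\<not> E a4 a1) \<and> (\<not> E a4 a2) \<and> (E a4 a3) \<and> (\<not> E a4 a4) \<and> (E a4 a5) \<and> (\<not> E a5 a0) \<and> (\<not> E a5 a1) \<and> (\<not> E a5 a2) \<and> (\<not> E a5 a3) \<and> (E a5 a4) \<and> (\<not> E a5 a5)"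
  unfolding induced_P6_def all6 by simp 

lemma C5_iff:
  "induced_C5 V E [a0,a1,a2,a3,a4] \<longleftrightarrow> distinct [a0,a1,a2,a3,a4] \<and> set [a0,a1,a2,a3,a4] \<subseteq> V \<and>
   (\<not> E a0 a0) \<and> (E a0 a1) \<and> (\<not> E a0 a2) \<and> (\<not> E a0 a3) \<and> (E a0 a4) \<and> (E a1 a0) \<and> (\<not> E a1 a1) \<and> (E a1 a2) \<and> (\<not> E a1 a3) \<and> (\<not> E a1 a4) \<and> (\<not> E a2 a0) \<and> (E a2 a1) \<and> (\<not> E a2 a2) \<and> (E a2 a3) \<and> (\<not> E a2 a4) \<and> (\<not> E a3 a0) \<and> (\<not> E a3 a1) \<and> (E a3 a2) \<and> (\<not> E a3 a3) \<and> (E a3 a4) \<and> (E a4 a0) \<and> (\<not> E a4 a1) \<and> (\<not> E a4 a2) \<and> (E a4 a3) \<and> (\<not> E a4 a4)"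
  unfolding induced_C5_def all5 by simp 


lemma C5_rot:
  assumes "induced_C5 V E [a,b,c,d,e]" shows "induced_C5 V E [b,c,d,e,a]"
  using assms unfolding C5_iff by auto

lemma P6_rev:
  assumes "induced_P6 V E [a,b,c,d,e,f]" shows "induced_P6 V E [f,e,d,c,b,a]"
  using assms unfolding P6_iff by auto

lemma exit_lemma:
  assumes "R\<^sup>*\<^sup>* x y" "P x" "\<not> P y"
  shows "\<exists>u w. R\<^sup>*\<^sup>* x u \<and> R u w \<and> P u \<and> \<not> P w"
  using assms
proof (induction rule: rtranclp_induct)
  case base then show ?case by simp
next
  case (step y z)
  show ?case
  proof (cases "P y")
    case True then show ?thesis using step by blast
  next
    case False then show ?thesis using step by blast
  qed
qed

lemma P6_map:
  assumes "induced_P6 V' E' H" "\<forall>x\<in>set H. f x \<in> V" "inj_on f (set H)"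
    "\<forall>x\<in>set H. \<forall>y\<in>set H. E (f x) (f y) \<longleftrightarrow> E' x y"
  shows "induced_P6 V E (map f H)"
  using assms unfolding induced_P6_def by (auto simp: distinct_map)

lemma C5_map:
  assumes "induced_C5 V' E' H" "\<forall>x\<in>set H. f x \<in> V" "inj_on f (set H)"
    "\<forall>x\<in>set H. \<forall>y\<in>set H. E (f x) (f y) \<longleftrightarrow> E' x y"
  shows "induced_C5 V E (map f H)"
  using assms unfolding induced_C5_def by (auto simp: distinct_map)

lemma reach_trans: "reach_in E A x y \<Longrightarrow> reach_in E A y z \<Longrightarrow> reach_in E A x z"
  unfolding reach_in_def by auto

lemma reach_edge: "x \<in> A \<Longrightarrow> y \<in> A \<Longrightarrow> E x y \<Longrightarrow> reach_in E A x y"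
  unfolding reach_in_def by auto

lemma reach_sym:
  assumes "graph V E" "reach_in E A x y" shows "reach_in E A y x"
proof -
  have s: "symp (\<lambda>u v. E u v \<and> u \<in> A \<and> v \<in> A)"
    using assms(1) unfolding graph_def symp_def by blast
  show ?thesis using assms(2) sympD[OF symp_rtranclp[OF s]] unfolding reach_in_def by blast
qed

lemma mkP6:
  assumes g: "graph V E" and v: "a \<in> V" "b \<in> V" "c \<in> V" "d \<in> V" "e \<in> V" "f \<in> V"
    and ed: "E a b" "E b c" "E c d" "E d e" "E e f"
    and ne: "\<not> E a c" "\<not> E a d" "\<not> E a e" "\<not> E a f" "\<not> E b d" "\<not> E b e" "\<not> E b f"
      "\<not> E c e" "\<not> E c f" "\<not> E d f"
    and df: "a \<noteq> c" "a \<noteq> d" "a \<noteq> e" "a \<noteq> f" "b \<noteq> d" "b \<noteq> e" "b \<noteq> f" "c \<noteq> e"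
      "c \<noteq> f" "d \<noteq> f"
  shows "induced_P6 V E [a,b,c,d,e,f]"
proof -
  have s: "\<And>x y. E x y \<Longrightarrow> E y x" and irr: "\<And>x. \<not> E x x"
    using g unfolding graph_def by blast+
  have n: "\<And>x y. \<not> E x y \<Longrightarrow> \<not> E y x" using s by blast
  have d2: "a \<noteq> b" "b \<noteq> c" "c \<noteq> d" "d \<noteq> e" "e \<noteq> f" using ed irr by auto
  note F = ed ne irr s[OF ed(1)] s[OF ed(2)] s[OF ed(3)] s[OF ed(4)] s[OF ed(5)]
      n[OF ne(1)] n[OF ne(2)] n[OF ne(3)] n[OF ne(4)] n[OF ne(5)] n[OF ne(6)] n[OF ne(7)]
      n[OF ne(8)] n[OF ne(9)] n[OF ne(10)]
  have dd: "distinct [a,b,c,d,e,f]" using df d2 by auto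
  have ss: "set [a,b,c,d,e,f] \<subseteq> V" using v by auto
  show ?thesis unfolding P6_iff
    apply (intro conjI dd ss)
    apply (rule F)+
    done
qed

lemma core:
  assumes g: "graph V E" and SV: "S \<subseteq> V"
  and bcd: "b \<in> V - S" "c \<in> V - S" "d \<in> V - S" "b \<noteq> d"
  and e1: "E b c" "E c d" "\<not> E b d"
  and xs: "x1 \<in> S" "x2 \<in> S"
  and e2: "E x2 b" "\<not> E x2 c" "\<not> E x2 d" "\<not> E x1 b" "\<not> E x1 c" "\<not> E x1 d" "\<not> E x1 x2"
  and k: "\<not> reach_in E (V - S) k b"
  and k1: "\<exists>u. reach_in E (V - S) k u \<and> E x1 u"
  and k2: "\<exists>u. reach_in E (V - S) k u \<and> E x2 u"
  shows "\<exists>p. induced_P6 V E p"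
proof -
  have sym: "\<And>x y. E x y \<Longrightarrow> E y x" and irr: "\<And>x. \<not> E x x"
    using g unfolding graph_def by blast+
  have rbc: "reach_in E (V - S) b c" by (rule reach_edge[of b "V - S" c E, OF bcd(1) bcd(2) e1(1)])
  have rbd: "reach_in E (V - S) b d" by (rule reach_trans[OF rbc reach_edge[of c "V - S" d E, OF bcd(2) bcd(3) e1(2)]])
  have notK: "z \<in> V - S \<and> z \<noteq> b \<and> z \<noteq> c \<and> z \<noteq> d \<and> \<not> E z b \<and> \<not> E z c \<and> \<not> E z d
     \<and> \<not> E b z \<and> \<not> E c z \<and> \<not> E d z" if "reach_in E (V - S) k z" for z
  proof -
    have zin: "z \<in> V - S" using that unfolding reach_in_def by blast
    have nb: "\<not> reach_in E (V - S) z b" using reach_trans[OF that] k by blast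
    have nc: "\<not> reach_in E (V - S) z c" using nb reach_trans[OF _ reach_sym[OF g rbc], of z] by blast
    have nd: "\<not> reach_in E (V - S) z d" using nb reach_trans[OF _ reach_sym[OF g rbd], of z] by blast
    have a1: "\<not> E z y" if "reach_in E (V - S) b y" "y \<in> V - S" for y
    proof
      assume "E z y"
      then have "reach_in E (V - S) z y" using zin that(2) by (rule reach_edge[of z "V - S" y E, rotated 2])
      then have "reach_in E (V - S) z b" by (rule reach_trans[OF _ reach_sym[OF g that(1)]])
      then show False using nb by blast
    qed
    have a2: "z \<noteq> y" if "reach_in E (V - S) b y" for y
      using that nb reach_sym[OF g that] by blast
    have rbb: "reach_in E (V - S) b b" using bcd unfolding reach_in_def by simp
    show ?thesis using zin a1[OF rbb] a1[OF rbc] a1[OF rbd] a2[OF rbb] a2[OF rbc] a2[OF rbd]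
      bcd sym[of b z] sym[of c z] sym[of d z] by blast
  qed
  obtain r where r: "reach_in E (V - S) k r" "E x2 r" using k2 by blast
  obtain k1' where k1': "reach_in E (V - S) k k1'" "E x1 k1'" using k1 by blast
  have x12: "x1 \<notin> V - S" "x2 \<notin> V - S" "x1 \<noteq> x2" "x1 \<in> V" "x2 \<in> V" using xs SV e2 by blast+
  show ?thesis
  proof (cases "E x2 k1'")
    case True
    note F = notK[OF k1'(1)] True k1' x12 bcd e1 e2 irr
    have "induced_P6 V E [d,c,b,x2,k1',x1]"
      by (rule mkP6[OF g]) (insert F, blast dest: sym)+
    then show ?thesis by blast
  next
    case False
    have "reach_in E (V - S) r k1'" by (rule reach_trans[OF reach_sym[OF g r(1)] k1'(1)])
    then have "(\<lambda>u v. E u v \<and> u \<in> V - S \<and> v \<in> V - S)\<^sup>*\<^sup>* r k1'" unfolding reach_in_def by blast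
    from exit_lemma[OF this, of "E x2"] r False obtain u w where
      uw: "(\<lambda>u v. E u v \<and> u \<in> V - S \<and> v \<in> V - S)\<^sup>*\<^sup>* r u" "E u w" "u \<in> V - S" "w \<in> V - S"
        "E x2 u" "\<not> E x2 w" by blast
    have ru: "reach_in E (V - S) k u"
      using uw(1,3) r(1) unfolding reach_in_def by (blast intro: rtranclp_trans)
    have rw: "reach_in E (V - S) k w" by (rule reach_trans[OF ru reach_edge[of u "V - S" w E, OF uw(3) uw(4) uw(2)]])
    note F = notK[OF ru] notK[OF rw] uw x12 bcd e1 e2 irr
    have "induced_P6 V E [d,c,b,x2,u,w]"
      by (rule mkP6[OF g]) (insert F, blast dest: sym)+
    then show ?thesis by blast
  qed
qed

lemma sep_from_min:
  assumes g: "graph V E" and m: "minimal_separator V E S"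
  shows "\<forall>b\<in>V - S. \<exists>k. \<not> reach_in E (V - S) k b \<and> (\<forall>s\<in>S. \<exists>u. reach_in E (V - S) k u \<and> E s u)"
proof
  fix b assume b: "b \<in> V - S"
  obtain K K' where KK: "component E (V - S) K" "component E (V - S) K'" "K \<noteq> K'"
    "\<forall>s\<in>S. (\<exists>k\<in>K. E s k) \<and> (\<exists>k\<in>K'. E s k)"
    using m unfolding minimal_separator_def by blast
  obtain k1 where k1: "k1 \<in> V - S" "K = {y. reach_in E (V - S) k1 y}"
    using KK(1) unfolding component_def by blast
  obtain k2 where k2: "k2 \<in> V - S" "K' = {y. reach_in E (V - S) k2 y}"
    using KK(2) unfolding component_def by blast
  show "\<exists>k. \<not> reach_in E (V - S) k b \<and> (\<forall>s\<in>S. \<exists>u. reach_in E (V - S) k u \<and> E s u)"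
  proof (cases "reach_in E (V - S) k1 b")
    case False then show ?thesis using KK(4) k1(2) by blast
  next
    case T1: True
    show ?thesis
    proof (cases "reach_in E (V - S) k2 b")
      case False then show ?thesis using KK(4) k2(2) by blast
    next
      case T2: True
      have "reach_in E (V - S) k1 y \<longleftrightarrow> reach_in E (V - S) k2 y" for y
      proof
        assume "reach_in E (V - S) k1 y"
        then have "reach_in E (V - S) b y" using reach_trans[OF reach_sym[OF g T1]] by blast
        then show "reach_in E (V - S) k2 y" using reach_trans[OF T2] by blast
      next
        assume "reach_in E (V - S) k2 y"
        then have "reach_in E (V - S) b y" using reach_trans[OF reach_sym[OF g T2]] by blast
        then show "reach_in E (V - S) k1 y" using reach_trans[OF T1] by blast
      qed
      then have "K = K'" using k1 k2 by blast
      then show ?thesis using KK(3) by blast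
    qed
  qed
qed

locale ctx =
  fixes V :: "'a set" and E :: "'a \<Rightarrow> 'a \<Rightarrow> bool" and S :: "'a set" and P :: "'a set set"
  assumes g: "graph V E" and SV: "S \<subseteq> V" and part: "chromatic_partition V E S P"
  and sep: "\<forall>b\<in>V - S. \<exists>k. \<not> reach_in E (V - S) k b \<and> (\<forall>s\<in>S. \<exists>u. reach_in E (V - S) k u \<and> E s u)"
begin

abbreviation "V' \<equiv> contract_V V S P"
abbreviation "E' \<equiv> contract_E V E S P"

definition hard :: "('a + 'a set) set \<Rightarrow> 'a set \<Rightarrow> bool" where
  "hard A X \<longleftrightarrow> \<not> (\<exists>x\<in>X. \<forall>v. Inl v \<in> A \<and> E' (Inr X) (Inl v) \<longrightarrow> E x v)"

lemma sym: "E x y \<Longrightarrow> E y x" and irr: "\<not> E x x"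
  using g unfolding graph_def by blast+

lemma pne: "X \<in> P \<Longrightarrow> X \<noteq> {}"
  using part unfolding chromatic_partition_def by blast
lemma psub: "X \<in> P \<Longrightarrow> X \<subseteq> S"
  using part unfolding chromatic_partition_def by blast
lemma pind: "X \<in> P \<Longrightarrow> x \<in> X \<Longrightarrow> y \<in> X \<Longrightarrow> \<not> E x y"
proof -
  assume "X \<in> P" "x \<in> X" "y \<in> X"
  then have "one_chromatic V E X" using part unfolding chromatic_partition_def by blast
  then have "independent E X" unfolding one_chromatic_def by blast
  then show "\<not> E x y" using \<open>x \<in> X\<close> \<open>y \<in> X\<close> unfolding independent_def by blast
qed
lemma pdisj: "X \<in> P \<Longrightarrow> Y \<in> P \<Longrightarrow> X \<noteq> Y \<Longrightarrow> x \<in> X \<Longrightarrow> x \<notin> Y"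
proof -
  assume "X \<in> P" "Y \<in> P" "X \<noteq> Y" "x \<in> X"
  then have "X \<inter> Y = {}" using part unfolding chromatic_partition_def by blast
  then show "x \<notin> Y" using \<open>x \<in> X\<close> by blast
qed
lemma pcomp: "X \<in> P \<Longrightarrow> Y \<in> P \<Longrightarrow> X \<noteq> Y \<Longrightarrow> x \<in> X \<Longrightarrow> y \<in> Y \<Longrightarrow> E x y"
proof -
  assume "X \<in> P" "Y \<in> P" "X \<noteq> Y" "x \<in> X" "y \<in> Y"
  then have "complete_to E X Y" using part unfolding chromatic_partition_def by blast
  then show "E x y" using \<open>x \<in> X\<close> \<open>y \<in> Y\<close> unfolding complete_to_def by blast
qed

lemma V'_simps [simp]: "Inl v \<in> V' \<longleftrightarrow> v \<in> V - S" "Inr X \<in> V' \<longleftrightarrow> X \<in> P"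
  unfolding contract_V_def by auto

lemma E'_inr: "X \<in> P \<Longrightarrow> Y \<in> P \<Longrightarrow> X \<noteq> Y \<Longrightarrow> E' (Inr X) (Inr Y)"
proof -
  assume a: "X \<in> P" "Y \<in> P" "X \<noteq> Y"
  obtain x where "x \<in> X" using pne[OF a(1)] by blast
  moreover obtain y where "y \<in> Y" using pne[OF a(2)] by blast
  ultimately have "E x y" using pcomp[OF a] by blast
  then show ?thesis using a \<open>x \<in> X\<close> \<open>y \<in> Y\<close> by auto
qed

lemma nonadj: "X \<in> P \<Longrightarrow> c \<in> V - S \<Longrightarrow> \<not> E' (Inr X) (Inl c) \<Longrightarrow> \<forall>x\<in>X. \<not> E x c"
  by simp

lemma good_map:
  assumes "set H \<subseteq> V'" "\<forall>X. Inr X \<in> set H \<longrightarrow> \<not> hard (set H) X"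
  shows "\<exists>f. (\<forall>x\<in>set H. f x \<in> V) \<and> inj_on f (set H) \<and>
    (\<forall>x\<in>set H. \<forall>y\<in>set H. E (f x) (f y) \<longleftrightarrow> E' x y)"
proof -
  define f where "f z = (case z of Inl v \<Rightarrow> v | Inr X \<Rightarrow>
     (SOME x. x \<in> X \<and> (\<forall>v. Inl v \<in> set H \<and> E' (Inr X) (Inl v) \<longrightarrow> E x v)))" for z
  have fX: "f (Inr X) \<in> X \<and> (\<forall>v. Inl v \<in> set H \<and> E' (Inr X) (Inl v) \<longrightarrow> E (f (Inr X)) v)"
    if "Inr X \<in> set H" for X
  proof -
    have "\<exists>x. x \<in> X \<and> (\<forall>v. Inl v \<in> set H \<and> E' (Inr X) (Inl v) \<longrightarrow> E x v)"
      using assms(2) that unfolding hard_def by blast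
    then show ?thesis unfolding f_def sum.case by (rule someI_ex)
  qed
  have fl: "f (Inl v) = v" for v unfolding f_def by simp
  have HL: "v \<in> V - S" if "Inl v \<in> set H" for v
  proof -
    have "Inl v \<in> V'" using that assms(1) by blast
    then show ?thesis by simp
  qed
  have HR: "X \<in> P" if "Inr X \<in> set H" for X
  proof -
    have "Inr X \<in> V'" using that assms(1) by blast
    then show ?thesis by simp
  qed
  have fR: "f (Inr X) \<in> X" "f (Inr X) \<in> S" "f (Inr X) \<in> V"
    "\<And>v. Inl v \<in> set H \<Longrightarrow> E' (Inr X) (Inl v) \<Longrightarrow> E (f (Inr X)) v"
    if "Inr X \<in> set H" for X
    using fX[OF that] psub[OF HR[OF that]] SV by blast+
  have inV: "\<forall>x\<in>set H. f x \<in> V"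
  proof
    fix z assume z: "z \<in> set H"
    show "f z \<in> V"
    proof (cases z)
      case (Inl v) then show ?thesis using HL z fl by auto
    next
      case (Inr X) then show ?thesis using fR(3) z by blast
    qed
  qed
  have inj: "inj_on f (set H)"
  proof (rule inj_onI)
    fix z1 z2 assume z: "z1 \<in> set H" "z2 \<in> set H" "f z1 = f z2"
    show "z1 = z2"
    proof (cases z1; cases z2)
      fix u v assume "z1 = Inl u" "z2 = Inl v" then show ?thesis using z fl by simp
    next
      fix u Y assume a: "z1 = Inl u" "z2 = Inr Y"
      then have "u \<notin> S" "f z2 \<in> S" using HL fR(2) z by blast+
      then show ?thesis using z(3) a fl by simp
    next
      fix X v assume a: "z1 = Inr X" "z2 = Inl v"
      then have "v \<notin> S" "f z1 \<in> S" using HL fR(2) z by blast+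
      then show ?thesis using z(3) a fl by simp
    next
      fix X Y assume a: "z1 = Inr X" "z2 = Inr Y"
      show ?thesis
      proof (rule ccontr)
        assume "z1 \<noteq> z2" then have "X \<noteq> Y" using a by simp
        then have "f z1 \<notin> Y" using pdisj[OF HR HR] fR(1) z a by blast
        then show False using fR(1) z a by metis
      qed
    qed
  qed
  have adj: "\<forall>x\<in>set H. \<forall>y\<in>set H. E (f x) (f y) \<longleftrightarrow> E' x y"
  proof (intro ballI)
    fix z1 z2 assume z: "z1 \<in> set H" "z2 \<in> set H"
    show "E (f z1) (f z2) \<longleftrightarrow> E' z1 z2"
    proof (cases z1; cases z2)
      fix u v assume "z1 = Inl u" "z2 = Inl v" then show ?thesis using z fl HL by auto
    next
      fix u Y assume a: "z1 = Inl u" "z2 = Inr Y"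
      have u: "u \<in> V - S" and Y: "Y \<in> P" using HL HR z a by blast+
      have y: "f (Inr Y) \<in> Y" using fR(1) z a by blast
      show ?thesis
      proof
        assume "E (f z1) (f z2)" then show "E' z1 z2" using a fl u Y y by auto
      next
        assume "E' z1 z2"
        then have "\<exists>y\<in>Y. E u y" using a by simp
        then have "E' (Inr Y) (Inl u)" using u Y sym by auto
        then have "E (f (Inr Y)) u" using fR(4) z a by blast
        then show "E (f z1) (f z2)" using a fl sym by simp
      qed
    next
      fix X v assume a: "z1 = Inr X" "z2 = Inl v"
      have v: "v \<in> V - S" and X: "X \<in> P" using HL HR z a by blast+
      have x: "f (Inr X) \<in> X" using fR(1) z a by blast
      show ?thesis
      proof
        assume "E (f z1) (f z2)" then show "E' z1 z2" using a fl v X x by auto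
      next
        assume "E' z1 z2"
        then have "E (f (Inr X)) v" using fR(4) z a by blast
        then show "E (f z1) (f z2)" using a fl by simp
      qed
    next
      fix X Y assume a: "z1 = Inr X" "z2 = Inr Y"
      have X: "X \<in> P" and Y: "Y \<in> P" using HR z a by blast+
      show ?thesis
      proof (cases "X = Y")
        case True then show ?thesis using a irr by simp
      next
        case False
        then show ?thesis using a E'_inr[OF X Y False] pcomp[OF X Y False] fR(1) z by auto
      qed
    qed
  qed
  show ?thesis using inV inj adj by blast
qed

lemma hard_nbrs:
  assumes "X \<in> P" "hard A X" "\<forall>v. Inl v \<in> A \<and> E' (Inr X) (Inl v) \<longrightarrow> v = a \<or> v = b"
  shows "Inl a \<in> A \<and> E' (Inr X) (Inl a) \<and> Inl b \<in> A \<and> E' (Inr X) (Inl b) \<and> a \<noteq> b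
     \<and> \<not> (\<exists>x\<in>X. E x a \<and> E x b)"
proof -
  define Q where "Q v \<longleftrightarrow> Inl v \<in> A \<and> E' (Inr X) (Inl v)" for v
  have ex: "Q v \<Longrightarrow> \<exists>x\<in>X. E x v" for v unfolding Q_def by simp
  have h: "\<And>x. x \<in> X \<Longrightarrow> \<exists>v. Q v \<and> \<not> E x v" using assms(2) unfolding hard_def Q_def by blast
  have ab: "\<And>v. Q v \<Longrightarrow> v = a \<or> v = b" using assms(3) unfolding Q_def by blast
  have qa: "Q a"
  proof (rule ccontr)
    assume na: "\<not> Q a"
    show False
    proof (cases "Q b")
      case True then obtain x where x: "x \<in> X" "E x b" using ex by blast
      obtain v where "Q v" "\<not> E x v" using h[OF x(1)] by blast
      then show False using ab[of v] na x by blast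
    next
      case False then obtain x where x: "x \<in> X" using pne[OF assms(1)] by blast
      obtain v where "Q v" "\<not> E x v" using h[OF x(1)] by blast
      then show False using ab[of v] na False by blast
    qed
  qed
  obtain xa where xa: "xa \<in> X" "E xa a" using ex[OF qa] by blast
  have qb: "Q b"
  proof (rule ccontr)
    assume nb: "\<not> Q b"
    obtain v where "Q v" "\<not> E xa v" using h[OF xa(1)] by blast
    then show False using ab[of v] nb xa by blast
  qed
  have "a \<noteq> b"
  proof
    assume "a = b"
    obtain v where "Q v" "\<not> E xa v" using h[OF xa(1)] by blast
    then show False using ab[of v] \<open>a = b\<close> xa by blast
  qed
  moreover have "\<not> (\<exists>x\<in>X. E x a \<and> E x b)"
  proof
    assume "\<exists>x\<in>X. E x a \<and> E x b"
    then obtain x where x: "x \<in> X" "E x a" "E x b" by blast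
    obtain v where "Q v" "\<not> E x v" using h[OF x(1)] by blast
    then show False using ab[of v] x by blast
  qed
  ultimately show ?thesis using qa qb unfolding Q_def by blast
qed

lemma mid:
  assumes X: "X \<in> P" and bcd: "b \<in> V - S" "c \<in> V - S" "d \<in> V - S" "b \<noteq> d"
    and e: "E b c" "E c d" "\<not> E b d"
    and ea: "\<exists>x\<in>X. E x a" and eb: "\<exists>x\<in>X. E x b" and hab: "\<not> (\<exists>x\<in>X. E x a \<and> E x b)"
    and nc: "\<forall>x\<in>X. \<not> E x c" and nd: "\<forall>x\<in>X. \<not> E x d"
  shows "\<exists>p. induced_P6 V E p"
proof -
  obtain x1 where x1: "x1 \<in> X" "E x1 a" using ea by blast
  obtain x2 where x2: "x2 \<in> X" "E x2 b" using eb by blast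
  obtain k where k: "\<not> reach_in E (V - S) k b" "\<forall>s\<in>S. \<exists>u. reach_in E (V - S) k u \<and> E s u"
    using sep bcd(1) by blast
  have xs: "x1 \<in> S" "x2 \<in> S" using x1(1) x2(1) psub[OF X] by blast+
  have n1: "\<not> E x1 b" using hab x1 by blast
  have k1: "\<exists>u. reach_in E (V - S) k u \<and> E x1 u" using k(2) xs(1) by blast
  have k2: "\<exists>u. reach_in E (V - S) k u \<and> E x2 u" using k(2) xs(2) by blast
  show ?thesis
    by (rule core[OF g SV bcd e xs x2(2) nc[rule_format, OF x2(1)] nd[rule_format, OF x2(1)]
          n1 nc[rule_format, OF x1(1)] nd[rule_format, OF x1(1)] pind[OF X x1(1) x2(1)] k(1) k1 k2])
qed

lemma isInl:
  assumes "z \<in> V'" "z \<noteq> Inr X" "\<not> E' (Inr X) z" "X \<in> P"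
  shows "\<exists>c. z = Inl c \<and> c \<in> V - S \<and> (\<forall>x\<in>X. \<not> E x c)"
proof (cases z)
  case (Inl c) then show ?thesis using assms by simp
next
  case (Inr Y)
  then have "Y \<in> P" "Y \<noteq> X" using assms by auto
  then show ?thesis using E'_inr[OF assms(4) \<open>Y \<in> P\<close>] assms(3) Inr by auto
qed

lemma end_case:
  assumes X: "X \<in> P" and hd: "hard A X"
    and nb: "\<forall>v. Inl v \<in> A \<and> E' (Inr X) (Inl v) \<longrightarrow> Inl v = p"
  shows False
proof -
  have "\<forall>v. Inl v \<in> A \<and> E' (Inr X) (Inl v) \<longrightarrow> v = projl p \<or> v = projl p"
    using nb by force
  from hard_nbrs[OF X hd this] show False by blast
qed

lemma nbrs_Inl:
  assumes X: "X \<in> P" and hd: "hard A X"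
    and nb: "\<forall>v. Inl v \<in> A \<and> E' (Inr X) (Inl v) \<longrightarrow> Inl v = p \<or> Inl v = q"
  shows "\<exists>a b. p = Inl a \<and> q = Inl b \<and> (\<exists>x\<in>X. E x a) \<and> (\<exists>x\<in>X. E x b) \<and>
     \<not> (\<exists>x\<in>X. E x a \<and> E x b)"
proof -
  define a where "a = projl p"
  define b where "b = projl q"
  have "\<forall>v. Inl v \<in> A \<and> E' (Inr X) (Inl v) \<longrightarrow> v = a \<or> v = b"
    using nb unfolding a_def b_def by force
  note hn = hard_nbrs[OF X hd this]
  have pa: "p = Inl a"
  proof -
    have "Inl a = p \<or> Inl a = q" using hn nb by blast
    moreover have "Inl a \<noteq> q" using hn unfolding b_def by force
    ultimately show ?thesis by simp
  qed
  have qb: "q = Inl b"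
  proof -
    have "Inl b = p \<or> Inl b = q" using hn nb by blast
    moreover have "Inl b \<noteq> p" using hn unfolding a_def by force
    ultimately show ?thesis by simp
  qed
  have "(\<exists>x\<in>X. E x a) \<and> (\<exists>x\<in>X. E x b)" using hn by simp
  then show ?thesis using pa qb hn by blast
qed

lemma mid_case:
  assumes X: "X \<in> P" and hd: "hard A X"
    and nb: "\<forall>v. Inl v \<in> A \<and> E' (Inr X) (Inl v) \<longrightarrow> Inl v = p \<or> Inl v = q"
    and inV: "q \<in> V'" "c' \<in> V'" "d' \<in> V'"
    and ne: "c' \<noteq> Inr X" "d' \<noteq> Inr X" "q \<noteq> d'"
    and na: "\<not> E' (Inr X) c'" "\<not> E' (Inr X) d'"
    and e: "E' q c'" "E' c' d'" "\<not> E' q d'"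
  shows "\<exists>p. induced_P6 V E p"
proof -
  obtain a b where ab: "p = Inl a" "q = Inl b" "\<exists>x\<in>X. E x a" "\<exists>x\<in>X. E x b"
    "\<not> (\<exists>x\<in>X. E x a \<and> E x b)" using nbrs_Inl[OF X hd nb] by blast
  obtain c where c: "c' = Inl c" "c \<in> V - S" "\<forall>x\<in>X. \<not> E x c" using isInl[OF inV(2) ne(1) na(1) X] by blast
  obtain d where d: "d' = Inl d" "d \<in> V - S" "\<forall>x\<in>X. \<not> E x d" using isInl[OF inV(3) ne(2) na(2) X] by blast
  have b: "b \<in> V - S" using inV(1) ab(2) by simp
  have "b \<noteq> d" using ne(3) ab(2) d(1) by simp
  moreover have "E b c" "E c d" "\<not> E b d" using e ab(2) c(1) d(1) by simp_all
  ultimately show ?thesis using mid[OF X b c(2) d(2) _ _ _ _ ab(3) ab(4) ab(5) c(3) d(3)] by blast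
qed

lemma c5_case:
  assumes X: "X \<in> P" and hd: "hard A X"
    and nb: "\<forall>v. Inl v \<in> A \<and> E' (Inr X) (Inl v) \<longrightarrow> Inl v = p \<or> Inl v = q"
    and inV: "p \<in> V'" "q \<in> V'" "c' \<in> V'" "d' \<in> V'"
    and ne: "c' \<noteq> Inr X" "d' \<noteq> Inr X" "p \<noteq> d'" "p \<noteq> q" "c' \<noteq> q"
    and na: "\<not> E' (Inr X) c'" "\<not> E' (Inr X) d'"
    and e: "E' p c'" "E' c' d'" "E' d' q" "\<not> E' p d'" "\<not> E' p q" "\<not> E' c' q"
  shows "\<exists>p. induced_P6 V E p"
proof -
  obtain a b where ab: "p = Inl a" "q = Inl b" "\<exists>x\<in>X. E x a" "\<exists>x\<in>X. E x b"
    "\<not> (\<exists>x\<in>X. E x a \<and> E x b)" using nbrs_Inl[OF X hd nb] by blast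
  obtain c where c: "c' = Inl c" "c \<in> V - S" "\<forall>x\<in>X. \<not> E x c" using isInl[OF inV(3) ne(1) na(1) X] by blast
  obtain d where d: "d' = Inl d" "d \<in> V - S" "\<forall>x\<in>X. \<not> E x d" using isInl[OF inV(4) ne(2) na(2) X] by blast
  have a: "a \<in> V - S" and b: "b \<in> V - S" using inV(1,2) ab(1,2) by simp_all
  obtain x1 where x1: "x1 \<in> X" "E x1 a" using ab by blast
  obtain x2 where x2: "x2 \<in> X" "E x2 b" using ab by blast
  have n1: "\<not> E x1 b" "\<not> E x2 a" using ab(5) x1 x2 by blast+
  have xS: "x1 \<in> S" "x2 \<in> S" using psub[OF X] x1 x2 by blast+
  have x12: "x1 \<noteq> x2" using x1 n1 by blast
  have ed: "E a c" "E c d" "E d b" "\<not> E a d" "\<not> E a b" "\<not> E c b"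
    using e ab c d by simp_all
  have ne2: "a \<noteq> d" "a \<noteq> b" "c \<noteq> b" using ne ab c d by simp_all
  have nx: "\<not> E x1 c" "\<not> E x1 d" "\<not> E x2 c" "\<not> E x2 d" using c d x1 x2 by blast+
  have vv: "x1 \<in> V" "a \<in> V" "c \<in> V" "d \<in> V" "b \<in> V" "x2 \<in> V"
    using SV xS a b c(2) d(2) by blast+
  have e5: "E b x2" using sym x2(2) by blast
  have n10: "\<not> E a x2" "\<not> E c x2" "\<not> E d x2"
    using sym n1(2) nx(3) nx(4) by blast+
  have d10: "x1 \<noteq> c" "x1 \<noteq> d" "x1 \<noteq> b" "a \<noteq> x2" "c \<noteq> x2" "d \<noteq> x2"
    using xS a b c(2) d(2) by blast+
  have "induced_P6 V E [x1, a, c, d, b, x2]"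
    by (rule mkP6[OF g vv x1(2) ed(1) ed(2) ed(3) e5 nx(1) nx(2) n1(1) pind[OF X x1(1) x2(1)]
      ed(4) ed(5) n10(1) ed(6) n10(2) n10(3) d10(1) d10(2) d10(3) x12 ne2(1) ne2(2) d10(4) ne2(3)
      d10(5) d10(6)])
  then show ?thesis by blast
qed

lemma hardP6:
  assumes H: "induced_P6 V' E' [h0,h1,h2,h3,h4,h5]"
    and X: "Inr X = h0 \<or> Inr X = h1 \<or> Inr X = h2" and hd: "hard (set [h0,h1,h2,h3,h4,h5]) X"
  shows "\<exists>p. induced_P6 V E p"
proof -
  have F: "E' h0 h1" "\<not> E' h0 h2" "\<not> E' h0 h3" "\<not> E' h0 h4" "\<not> E' h0 h5" "E' h1 h0" "E' h1 h2" "\<not> E' h1 h3" "\<not> E' h1 h4" "\<not> E' h1 h5" "\<not> E' h2 h0" "E' h2 h1" "E' h2 h3" "\<not> E' h2 h4" "\<not> E' h2 h5" "\<not> E' h3 h0" "\<not> E' h3 h1" "E' h3 h2" "E' h3 h4" "\<not> E' h3 h5" "\<not> E' h4 h0" "\<not> E' h4 h1" "\<not> E' h4 h2" "E' h4 h3" "E' h4 h5" "\<not> E' h5 h0" "\<not> E' h5 h1" "\<not> E' h5 h2" "\<not> E' h5 h3" "E' h5 h4"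
    using H unfolding P6_iff by simp_all
  have D: "h0 \<noteq> h1" "h0 \<noteq> h2" "h0 \<noteq> h3" "h0 \<noteq> h4" "h0 \<noteq> h5" "h1 \<noteq> h2" "h1 \<noteq> h3" "h1 \<noteq> h4" "h1 \<noteq> h5" "h2 \<noteq> h3" "h2 \<noteq> h4" "h2 \<noteq> h5" "h3 \<noteq> h4" "h3 \<noteq> h5" "h4 \<noteq> h5"
    using H unfolding P6_iff by simp_all
  have M: "h0 \<in> V'" "h1 \<in> V'" "h2 \<in> V'" "h3 \<in> V'" "h4 \<in> V'" "h5 \<in> V'"
    using H unfolding P6_iff by simp_all
  have XP: "X \<in> P" using X M by auto
  show ?thesis
  proof -
    { assume c: "Inr X = h0"
      have "\<forall>v. Inl v \<in> set [h0,h1,h2,h3,h4,h5] \<and> E' (Inr X) (Inl v) \<longrightarrow> Inl v = h1"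
        using c F D by auto
      then have False using end_case[OF XP hd] by blast }
    moreover
    { assume c: "Inr X = h1"
      have "\<forall>v. Inl v \<in> set [h0,h1,h2,h3,h4,h5] \<and> E' (Inr X) (Inl v) \<longrightarrow> Inl v = h0 \<or> Inl v = h2"
        using c F D by auto
      moreover have "h3 \<noteq> Inr X" "h4 \<noteq> Inr X" "\<not> E' (Inr X) h3" "\<not> E' (Inr X) h4"
        using c F D by simp_all
      ultimately have ?thesis using mid_case[OF XP hd, of h0 h2 h3 h4] M F D by blast }
    moreover
    { assume c: "Inr X = h2"
      have "\<forall>v. Inl v \<in> set [h0,h1,h2,h3,h4,h5] \<and> E' (Inr X) (Inl v) \<longrightarrow> Inl v = h1 \<or> Inl v = h3"
        using c F D by auto
      moreover have "h4 \<noteq> Inr X" "h5 \<noteq> Inr X" "\<not> E' (Inr X) h4" "\<not> E' (Inr X) h5"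
        using c F D by simp_all
      ultimately have ?thesis using mid_case[OF XP hd, of h1 h3 h4 h5] M F D by blast }
    ultimately show ?thesis using X by blast
  qed
qed

lemma hardC5:
  assumes H: "induced_C5 V' E' [h0,h1,h2,h3,h4]"
    and c: "Inr X = h0" and hd: "hard (set [h0,h1,h2,h3,h4]) X"
  shows "\<exists>p. induced_P6 V E p"
proof -
  have F: "E' h0 h1" "\<not> E' h0 h2" "\<not> E' h0 h3" "E' h0 h4" "E' h1 h0" "E' h1 h2" "\<not> E' h1 h3" "\<not> E' h1 h4" "\<not> E' h2 h0" "E' h2 h1" "E' h2 h3" "\<not> E' h2 h4" "\<not> E' h3 h0" "\<not> E' h3 h1" "E' h3 h2" "E' h3 h4" "E' h4 h0" "\<not> E' h4 h1" "\<not> E' h4 h2" "E' h4 h3"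
    using H unfolding C5_iff by simp_all
  have D: "h0 \<noteq> h1" "h0 \<noteq> h2" "h0 \<noteq> h3" "h0 \<noteq> h4" "h1 \<noteq> h2" "h1 \<noteq> h3" "h1 \<noteq> h4" "h2 \<noteq> h3" "h2 \<noteq> h4" "h3 \<noteq> h4"
    using H unfolding C5_iff by simp_all
  have M: "h0 \<in> V'" "h1 \<in> V'" "h2 \<in> V'" "h3 \<in> V'" "h4 \<in> V'"
    using H unfolding C5_iff by simp_all
  have XP: "X \<in> P" using c M by auto
  have "\<forall>v. Inl v \<in> set [h0,h1,h2,h3,h4] \<and> E' (Inr X) (Inl v) \<longrightarrow> Inl v = h1 \<or> Inl v = h4"
    using c F D by auto
  moreover have "h2 \<noteq> Inr X" "h3 \<noteq> Inr X" "\<not> E' (Inr X) h2" "\<not> E' (Inr X) h3"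
    using c F D by simp_all
  ultimately show ?thesis using c5_case[OF XP hd, of h1 h4 h2 h3] M F D by blast
qed

end

theorem lemma3:
  fixes V :: "'a set" and E :: "'a \<Rightarrow> 'a \<Rightarrow> bool" and S :: "'a set" and P :: "'a set set"
  assumes "graph V E"
    and "connected_graph V E"
    and "P6_C5_free V E"
    and "chromatic_cutset V E S"
    and "minimal_separator V E S"
    and "chromatic_partition V E S P"
  shows "P6_C5_free (contract_V V S P) (contract_E V E S P)"
proof -
  have SV: "S \<subseteq> V" using assms(4) unfolding chromatic_cutset_def cutset_def by blast
  note sep = sep_from_min[OF assms(1) assms(5)]
  interpret ctx V E S P using assms(1) SV assms(6) sep by unfold_locales
  have freeG: "\<not> (\<exists>p. induced_P6 V E p)" "\<not> (\<exists>c. induced_C5 V E c)"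
    using assms(3) unfolding P6_C5_free_def by blast+
  have noP6: "\<not> induced_P6 V' E' H" for H
  proof
    assume H: "induced_P6 V' E' H"
    then have "length H = 6" by (simp add: induced_P6_def)
    then obtain h0 h1 h2 h3 h4 h5 where Hd: "H = [h0,h1,h2,h3,h4,h5]"
      by (auto simp: numeral_eq_Suc length_Suc_conv)
    show False
    proof (cases "\<forall>X. Inr X \<in> set H \<longrightarrow> \<not> hard (set H) X")
      case True
      have "set H \<subseteq> V'" using H unfolding induced_P6_def by blast
      from good_map[OF this True] obtain f where f: "\<forall>x\<in>set H. f x \<in> V" "inj_on f (set H)"
        "\<forall>x\<in>set H. \<forall>y\<in>set H. E (f x) (f y) \<longleftrightarrow> E' x y" by blast
      have "induced_P6 V E (map f H)" using P6_map[OF H f] .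
      then show False using freeG by blast
    next
      case False
      then obtain X where X: "Inr X \<in> set H" "hard (set H) X" by blast
      show False
      proof (cases "Inr X = h0 \<or> Inr X = h1 \<or> Inr X = h2")
        case True then show False using hardP6[of h0 h1 h2 h3 h4 h5 X] H X Hd freeG by blast
      next
        case False
        then have "Inr X = h5 \<or> Inr X = h4 \<or> Inr X = h3" using X(1) Hd by auto
        moreover have "induced_P6 V' E' [h5,h4,h3,h2,h1,h0]" using P6_rev[of V' E' h0 h1 h2 h3 h4 h5] H Hd by simp
        moreover have "set [h5,h4,h3,h2,h1,h0] = set H" using Hd by auto
        ultimately show False using hardP6[of h5 h4 h3 h2 h1 h0 X] X(2) freeG by auto
      qed
    qed
  qed
  have noC5: "\<not> induced_C5 V' E' H" for H
  proof
    assume H: "induced_C5 V' E' H"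
    then have "length H = 5" by (simp add: induced_C5_def)
    then obtain h0 h1 h2 h3 h4 where Hd: "H = [h0,h1,h2,h3,h4]"
      by (auto simp: numeral_eq_Suc length_Suc_conv)
    show False
    proof (cases "\<forall>X. Inr X \<in> set H \<longrightarrow> \<not> hard (set H) X")
      case True
      have "set H \<subseteq> V'" using H unfolding induced_C5_def by blast
      from good_map[OF this True] obtain f where f: "\<forall>x\<in>set H. f x \<in> V" "inj_on f (set H)"
        "\<forall>x\<in>set H. \<forall>y\<in>set H. E (f x) (f y) \<longleftrightarrow> E' x y" by blast
      have "induced_C5 V E (map f H)" using C5_map[OF H f] .
      then show False using freeG by blast
    next
      case False
      then obtain X where X: "Inr X \<in> set H" "hard (set H) X" by blast
      have r0: "induced_C5 V' E' [h0,h1,h2,h3,h4]" using H Hd by simp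
      have r1: "induced_C5 V' E' [h1,h2,h3,h4,h0]" using C5_rot[OF r0] .
      have r2: "induced_C5 V' E' [h2,h3,h4,h0,h1]" using C5_rot[OF r1] .
      have r3: "induced_C5 V' E' [h3,h4,h0,h1,h2]" using C5_rot[OF r2] .
      have r4: "induced_C5 V' E' [h4,h0,h1,h2,h3]" using C5_rot[OF r3] .
      have s: "set [h1,h2,h3,h4,h0] = set H" "set [h2,h3,h4,h0,h1] = set H"
        "set [h3,h4,h0,h1,h2] = set H" "set [h4,h0,h1,h2,h3] = set H" "set [h0,h1,h2,h3,h4] = set H"
        using Hd by auto
      have "Inr X = h0 \<or> Inr X = h1 \<or> Inr X = h2 \<or> Inr X = h3 \<or> Inr X = h4" using X(1) Hd by auto
      moreover have "Inr X = h0 \<Longrightarrow> False" using hardC5[OF r0] X(2) s freeG by metis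
      moreover have "Inr X = h1 \<Longrightarrow> False" using hardC5[OF r1] X(2) s freeG by metis
      moreover have "Inr X = h2 \<Longrightarrow> False" using hardC5[OF r2] X(2) s freeG by metis
      moreover have "Inr X = h3 \<Longrightarrow> False" using hardC5[OF r3] X(2) s freeG by metis
      moreover have "Inr X = h4 \<Longrightarrow> False" using hardC5[OF r4] X(2) s freeG by metis
      ultimately show False by blast
    qed
  qed
  show ?thesis unfolding P6_C5_free_def using noP6 noC5 by blast
qed

end
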